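(* The axiom system $E_{FTP}$ is head normalizing for $T(\Sigma_{FTP})$: for every $t\in T(\Sigma_{FTP})$ there exists $t'\in T(\Sigma_{FTP})$ in head normal form such that $E_{FTP}\vdash t=t'$.
   Context: Fix a finite nonempty set $\mathcal A$ of actions, a finite set $\mathcal P$ of predicates, a subset $\mathcal P^I\subseteq\mathcal P$ of "implicit" predicates, and for each $P\in\mathcal P^I$ a set $\mathcal A_P\subseteq\mathcal A$. The signature $\Sigma_{FTP}$ consists of a constant $\delta$, a constant $\kappa_P$ for each $P\in\mathcal P$, a unary prefix $a.\_$ for each $a\in\mathcal A$, and binary $+$. Its operational semantics (transitions $\xrightarrow{a}$ and predicates $P\,t$ on closed terms) is the least one closed under the rules: $a.x\xrightarrow{a}x$; if $x\xrightarrow{a}x'$ then $x+y\xrightarrow{a}x'$; if $y\xrightarrow{a}y'$ then $x+y\xrightarrow{a}y'$; $P\kappa_P$; if $Px$ then $P(x+y)$; if $Py$ then $P(x+y)$; if $Px$ then $P(a.x)$ for all $P\in\mathcal P^I$ and $a\in\mathcal A_P$. $E_{FTP}$ consists of the axioms $x+y=y+x$, $(x+y)+z=x+(y+z)$, $x+x=x$, $x+\delta=x$, and $a.(x+\kappa_P)=a.(x+\kappa_P)+\kappa_P$ for all $P\in\mathcal P^I$, $a\in\mathcal A_P$. $E\vdash s=t$ means $s=t$ is derivable in equational logic (reflexivity, symmetry, transitivity, substitution instances, congruence). For a signature $\Sigma\supseteq\Sigma_{FTP}$, a closed term $t$ is in head normal form if $t=\sum_{i\in I}a_i.t_i+\sum_{j\in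 J}\kappa_{P_j}$ (finite sums, empty sum being $\delta$) where $\{P_j\mid j\in J\}$ is exactly the set of predicates satisfied by $t$. *)

theory Defs
  imports Main
begin

text \<open>Open terms over the signature Sigma_FTP, with variables of type 'v.
  Actions have type 'a (finite, nonempty), predicates type 'p (finite).\<close>

datatype ('a, 'p, 'v) ftp_term =
    Var 'v
  | Delta
  | Kappa 'p
  | Pref 'a "('a, 'p, 'v) ftp_term"
  | Plus "('a, 'p, 'v) ftp_term" "('a, 'p, 'v) ftp_term"

fun closed :: "('a, 'p, 'v) ftp_term \<Rightarrow> bool" where
  "closed (Var x) = False"
| "closed Delta = True"
| "closed (Kappa P) = True"
| "closed (Pref a t) = closed t"
| "closed (Plus t u) = (closed t \<and> closed u)"

fun subst :: "('v \<Rightarrow> ('a, 'p, 'w) ftp_term) \<Rightarrow> ('a, 'p, 'v) ftp_term \<Rightarrow> ('a, 'p, 'w) ftp_term" where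
  "subst \<sigma> (Var x) = \<sigma> x"
| "subst \<sigma> Delta = Delta"
| "subst \<sigma> (Kappa P) = Kappa P"
| "subst \<sigma> (Pref a t) = Pref a (subst \<sigma> t)"
| "subst \<sigma> (Plus t u) = Plus (subst \<sigma> t) (subst \<sigma> u)"

text \<open>Predicates satisfied by terms (least relation closed under the rules).
  PI = implicit predicates, AP P = the set A_P.\<close>
inductive sat :: "'p set \<Rightarrow> ('p \<Rightarrow> 'a set) \<Rightarrow> ('a, 'p, 'v) ftp_term \<Rightarrow> 'p \<Rightarrow> bool"
  for PI :: "'p set" and AP :: "'p \<Rightarrow> 'a set" where
  sat_kappa: "sat PI AP (Kappa P) P"
| sat_plusL: "sat PI AP x P \<Longrightarrow> sat PI AP (Plus x y) P"
| sat_plusR: "sat PI AP y P \<Longrightarrow> sat PI AP (Plus x y) P"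
| sat_pref: "P \<in> PI \<Longrightarrow> a \<in> AP P \<Longrightarrow> sat PI AP x P \<Longrightarrow> sat PI AP (Pref a x) P"

text \<open>Transitions (part of the operational semantics; not needed by the statement itself).\<close>
inductive trans :: "('a, 'p, 'v) ftp_term \<Rightarrow> 'a \<Rightarrow> ('a, 'p, 'v) ftp_term \<Rightarrow> bool" where
  "trans (Pref a x) a x"
| "trans x a x' \<Longrightarrow> trans (Plus x y) a x'"
| "trans y a y' \<Longrightarrow> trans (Plus x y) a y'"

inductive eq_deriv :: "(('a, 'p, 'v) ftp_term \<times> ('a, 'p, 'v) ftp_term) set
    \<Rightarrow> ('a, 'p, 'v) ftp_term \<Rightarrow> ('a, 'p, 'v) ftp_term \<Rightarrow> bool"
  for E where
  eq_refl: "eq_deriv E t t"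
| eq_sym: "eq_deriv E s t \<Longrightarrow> eq_deriv E t s"
| eq_trans: "eq_deriv E s t \<Longrightarrow> eq_deriv E t u \<Longrightarrow> eq_deriv E s u"
| eq_inst: "(l, r) \<in> E \<Longrightarrow> eq_deriv E (subst \<sigma> l) (subst \<sigma> r)"
| eq_pref: "eq_deriv E s t \<Longrightarrow> eq_deriv E (Pref a s) (Pref a t)"
| eq_plus: "eq_deriv E s1 t1 \<Longrightarrow> eq_deriv E s2 t2 \<Longrightarrow> eq_deriv E (Plus s1 s2) (Plus t1 t2)"

text \<open>The axiom system E_FTP (variables are natural numbers: x = 0, y = 1, z = 2).\<close>
definition E_FTP :: "'p set \<Rightarrow> ('p \<Rightarrow> 'a set) \<Rightarrow> (('a, 'p, nat) ftp_term \<times> ('a, 'p, nat) ftp_term) set" where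
  "E_FTP PI AP =
     {(Plus (Var 0) (Var 1), Plus (Var 1) (Var 0)),
      (Plus (Plus (Var 0) (Var 1)) (Var 2), Plus (Var 0) (Plus (Var 1) (Var 2))),
      (Plus (Var 0) (Var 0), Var 0),
      (Plus (Var 0) Delta, Var 0)}
   \<union> {(Pref a (Plus (Var 0) (Kappa P)), Plus (Pref a (Plus (Var 0) (Kappa P))) (Kappa P))
       | P a. P \<in> PI \<and> a \<in> AP P}"

fun summands :: "('a, 'p, 'v) ftp_term \<Rightarrow> ('a, 'p, 'v) ftp_term set" where
  "summands (Plus t u) = summands t \<union> summands u"
| "summands t = {t}"

definition hnf :: "'p set \<Rightarrow> ('p \<Rightarrow> 'a set) \<Rightarrow> ('a, 'p, 'v) ftp_term \<Rightarrow> bool" where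
  "hnf PI AP t \<longleftrightarrow>
     ((t = Delta \<or> (\<forall>s \<in> summands t. (\<exists>a u. s = Pref a u) \<or> (\<exists>P. s = Kappa P)))
      \<and> {P. Kappa P \<in> summands t} = {P. sat PI AP t P})"

end

theory Submission
  imports Defs
begin

lemma sat_simps[simp]:
  "sat PI AP (Plus x y) P \<longleftrightarrow> sat PI AP x P \<or> sat PI AP y P"
  "sat PI AP Delta P \<longleftrightarrow> False"
  "sat PI AP (Kappa Q) P \<longleftrightarrow> P = Q"
  "sat PI AP (Pref a x) P \<longleftrightarrow> P \<in> PI \<and> a \<in> AP P \<and> sat PI AP x P"
  "sat PI AP (Var v) P \<longleftrightarrow> False"
  by (auto intro: sat.intros elim: sat.cases)

definition sg :: "('a,'p,'w) ftp_term \<Rightarrow> ('a,'p,'w) ftp_term \<Rightarrow> ('a,'p,'w) ftp_term \<Rightarrow> nat \<Rightarrow> ('a,'p,'w) ftp_term" where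
  "sg s t u n = (if n = 0 then s else if n = 1 then t else u)"

lemma ax_comm: "eq_deriv (E_FTP PI AP) (Plus s t) (Plus t s)"
  using eq_inst[of "Plus (Var 0) (Var 1)" "Plus (Var 1) (Var 0)" "E_FTP PI AP" "sg s t t"]
  by (simp add: E_FTP_def sg_def)

lemma ax_assoc: "eq_deriv (E_FTP PI AP) (Plus (Plus s t) u) (Plus s (Plus t u))"
  using eq_inst[of "Plus (Plus (Var 0) (Var 1)) (Var 2)" "Plus (Var 0) (Plus (Var 1) (Var 2))" "E_FTP PI AP" "sg s t u"]
  by (simp add: E_FTP_def sg_def)

lemma ax_idem: "eq_deriv (E_FTP PI AP) (Plus s s) s"
  using eq_inst[of "Plus (Var 0) (Var 0)" "Var 0" "E_FTP PI AP" "sg s s s"]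
  by (simp add: E_FTP_def sg_def)

lemma ax_delta: "eq_deriv (E_FTP PI AP) (Plus s Delta) s"
  using eq_inst[of "Plus (Var 0) Delta" "Var 0" "E_FTP PI AP" "sg s s s"]
  by (simp add: E_FTP_def sg_def)

lemma ax_kappa:
  assumes "P \<in> PI" "a \<in> AP P"
  shows "eq_deriv (E_FTP PI AP) (Pref a (Plus s (Kappa P))) (Plus (Pref a (Plus s (Kappa P))) (Kappa P))"
proof -
  have "(Pref a (Plus (Var 0) (Kappa P)), Plus (Pref a (Plus (Var 0) (Kappa P))) (Kappa P)) \<in> E_FTP PI AP"
    using assms unfolding E_FTP_def by blast
  from eq_inst[OF this, of "sg s s s"] show ?thesis by (simp add: sg_def)
qed

lemmas eq_trans_calc[trans] = eq_trans

lemma absorb: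
  "Kappa P \<in> summands t \<Longrightarrow> eq_deriv (E_FTP PI AP) t (Plus t (Kappa P))"
proof (induction t)
  case (Kappa x)
  then show ?case using ax_idem eq_sym by fastforce
next
  case (Plus t u)
  let ?E = "E_FTP PI AP"
  from Plus.prems have "Kappa P \<in> summands t \<or> Kappa P \<in> summands u" by simp
  then show ?case
  proof
    assume h: "Kappa P \<in> summands t"
    have "eq_deriv ?E (Plus t u) (Plus (Plus t (Kappa P)) u)"
      using eq_plus[OF Plus.IH(1)[OF h] eq_refl] .
    also have "eq_deriv ?E \<dots> (Plus t (Plus (Kappa P) u))" by (rule ax_assoc)
    also have "eq_deriv ?E \<dots> (Plus t (Plus u (Kappa P)))" by (rule eq_plus[OF eq_refl ax_comm])
    also have "eq_deriv ?E \<dots> (Plus (Plus t u) (Kappa P))" by (rule eq_sym[OF ax_assoc])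
    finally show ?thesis .
  next
    assume h: "Kappa P \<in> summands u"
    have "eq_deriv ?E (Plus t u) (Plus t (Plus u (Kappa P)))"
      using eq_plus[OF eq_refl Plus.IH(2)[OF h]] .
    also have "eq_deriv ?E \<dots> (Plus (Plus t u) (Kappa P))" by (rule eq_sym[OF ax_assoc])
    finally show ?thesis .
  qed
qed auto

fun build :: "('a,'p,'v) ftp_term \<Rightarrow> 'p list \<Rightarrow> ('a,'p,'v) ftp_term" where
  "build s [] = s"
| "build s (P # Ps) = Plus (build s Ps) (Kappa P)"

lemma build_eq:
  "(\<forall>P\<in>set Ps. eq_deriv E s (Plus s (Kappa P))) \<Longrightarrow> eq_deriv E s (build s Ps)"
proof (induction Ps)
  case Nil then show ?case by (simp add: eq_refl)
next
  case (Cons P Ps)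
  have "eq_deriv E s (Plus s (Kappa P))" using Cons.prems by simp
  moreover have "eq_deriv E (Plus s (Kappa P)) (Plus (build s Ps) (Kappa P))"
    using Cons by (auto intro: eq_plus eq_refl)
  ultimately show ?case by (auto intro: eq_trans)
qed

lemma summands_build: "summands (build s Ps) = summands s \<union> Kappa ` set Ps"
  by (induction Ps) auto

lemma sat_build: "sat PI AP (build s Ps) P \<longleftrightarrow> sat PI AP s P \<or> P \<in> set Ps"
  by (induction Ps) auto

lemma closed_build: "closed (build s Ps) = closed s"
  by (induction Ps) auto

lemma main:
  fixes PI :: "('p::finite) set" and AP :: "'p \<Rightarrow> ('a::finite) set"
    and t :: "('a, 'p, nat) ftp_term"
  shows "closed t \<Longrightarrow> \<exists>t'. closed t' \<and> hnf PI AP t' \<and> eq_deriv (E_FTP PI AP) t t'"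
proof (induction t)
  case (Var x) then show ?case by simp
next
  case Delta then show ?case by (auto simp: hnf_def intro!: exI[of _ Delta] eq_refl)
next
  case (Kappa P) then show ?case by (auto simp: hnf_def intro!: exI[of _ "Kappa P"] eq_refl)
next
  case (Plus t u)
  let ?E = "E_FTP PI AP"
  from Plus obtain t' u' where t': "closed t'" "hnf PI AP t'" "eq_deriv ?E t t'"
    and u': "closed u'" "hnf PI AP u'" "eq_deriv ?E u u'" by auto
  have tu: "eq_deriv ?E (Plus t u) (Plus t' u')" using t' u' by (auto intro: eq_plus)
  show ?case
  proof (cases "t' = Delta")
    case True
    have "eq_deriv ?E (Plus t' u') (Plus u' Delta)" using True ax_comm by metis
    also have "eq_deriv ?E \<dots> u'" by (rule ax_delta)
    finally show ?thesis using tu u' by (auto intro: eq_trans)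
  next
    case nt: False
    show ?thesis
    proof (cases "u' = Delta")
      case True
      have "eq_deriv ?E (Plus t' u') t'" using True ax_delta by metis
      then show ?thesis using tu t' by (auto intro: eq_trans)
    next
      case False
      have "hnf PI AP (Plus t' u')"
        using t'(2) u'(2) nt False unfolding hnf_def by auto
      then show ?thesis using tu t' u' by (intro exI[of _ "Plus t' u'"]) auto
    qed
  qed
next
  case (Pref a t)
  let ?E = "E_FTP PI AP"
  from Pref obtain t' where t': "closed t'" "hnf PI AP t'" "eq_deriv ?E t t'" by auto
  define S where "S = {P. P \<in> PI \<and> a \<in> AP P \<and> sat PI AP t' P}"
  have "finite S" by simp
  then obtain Ps where Ps: "set Ps = S" using finite_list by blast
  have ax: "eq_deriv ?E (Pref a t') (Plus (Pref a t') (Kappa P))" if "P \<in> S" for P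
  proof -
    have P: "P \<in> PI" "a \<in> AP P" "sat PI AP t' P" using that S_def by auto
    have "Kappa P \<in> summands t'" using t'(2) P(3) unfolding hnf_def by blast
    then have e: "eq_deriv ?E t' (Plus t' (Kappa P))" by (rule absorb)
    have "eq_deriv ?E (Pref a t') (Pref a (Plus t' (Kappa P)))" using e by (rule eq_pref)
    also have "eq_deriv ?E \<dots> (Plus (Pref a (Plus t' (Kappa P))) (Kappa P))"
      using ax_kappa[of P PI a AP] P(1,2) by blast
    also have "eq_deriv ?E \<dots> (Plus (Pref a t') (Kappa P))"
      by (rule eq_plus[OF eq_sym[OF eq_pref[OF e]] eq_refl])
    finally show ?thesis .
  qed
  have e1: "eq_deriv ?E (Pref a t) (Pref a t')" using t'(3) by (rule eq_pref)
  have e2: "eq_deriv ?E (Pref a t') (build (Pref a t') Ps)"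
    using ax Ps by (auto intro: build_eq)
  have "hnf PI AP (build (Pref a t') Ps)"
    unfolding hnf_def summands_build sat_build using Ps S_def by auto
  moreover have "closed (build (Pref a t') Ps)" using t' by (simp add: closed_build)
  ultimately show ?case using e1 e2 by (auto intro: eq_trans)
qed

theorem lemma2:
  fixes PI :: "('p::finite) set" and AP :: "'p \<Rightarrow> ('a::finite) set"
    and t :: "('a, 'p, nat) ftp_term"
  assumes "closed t"
  shows "\<exists>t'. closed t' \<and> hnf PI AP t' \<and> eq_deriv (E_FTP PI AP) t t'"
  using main assms by blast

end
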